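(* Let $n\ge 0$. The map $\mathrm{shift}$ restricts to bijections (1) from the set of feasible set partitions of $[n]$ onto the set of 2-regular set partitions $\Lambda$ of $[n+1]$ such that $1+\max B\neq \min B'$ for all blocks $B,B'\in\Lambda$; and (2) from the set of poor noncrossing set partitions of $[n]$ onto the set of 2-regular noncrossing set partitions of $[n+1]$.
   Context: A set partition is a set of nonempty pairwise disjoint finite sets of integers (blocks); it is a partition of $\mathcal X$ if the union of its blocks is $\mathcal X$; $[n]=\{1,\dots,n\}$. A pair $(i,j)$ is an arc of $\Lambda$ if $i<j$ lie in the same block and $j$ is the least element of that block greater than $i$; $\mathrm{Arc}(\Lambda)$ is the set of arcs, which together with the ground set determines $\Lambda$. $\Lambda$ is noncrossing if there are no arcs $(i,k),(j,l)$ with $i<j<k<l$. A partition is feasible if every block has at least two elements, poor if every block has at most two elements, and 2-regular if no block contains both $i$ and $i+1$ for any integer $i$. For a partition $\Lambda$ of $[n]$, $\mathrm{shift}(\Lambda)$ is the partition of $[n+1]$ with arc set $\{(i,j+1):(i,j)\in\mathrm{Arc}(\Lambda)\}$. *)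

theory Defs
  imports Main
begin

definition is_set_partition :: "int set set \<Rightarrow> bool" where
  "is_set_partition P \<longleftrightarrow>
     (\<forall>B\<in>P. B \<noteq> {} \<and> finite B) \<and>
     (\<forall>B\<in>P. \<forall>B'\<in>P. B \<noteq> B' \<longrightarrow> B \<inter> B' = {})"

definition partition_of :: "int set set \<Rightarrow> int set \<Rightarrow> bool" where
  "partition_of P X \<longleftrightarrow> is_set_partition P \<and> \<Union>P = X"

definition arcs :: "int set set \<Rightarrow> (int \<times> int) set" where
  "arcs P = {(i, j). \<exists>B\<in>P. i \<in> B \<and> j \<in> B \<and> i < j \<and> (\<forall>k\<in>B. i < k \<longrightarrow> j \<le> k)}"

definition noncrossing :: "int set set \<Rightarrow> bool" where
  "noncrossing P \<longleftrightarrow>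
     \<not> (\<exists>i j k l. (i, k) \<in> arcs P \<and> (j, l) \<in> arcs P \<and> i < j \<and> j < k \<and> k < l)"

definition feasible :: "int set set \<Rightarrow> bool" where
  "feasible P \<longleftrightarrow> (\<forall>B\<in>P. card B \<ge> 2)"

definition poor :: "int set set \<Rightarrow> bool" where
  "poor P \<longleftrightarrow> (\<forall>B\<in>P. card B \<le> 2)"

definition two_regular :: "int set set \<Rightarrow> bool" where
  "two_regular P \<longleftrightarrow> (\<forall>B\<in>P. \<forall>i. \<not> (i \<in> B \<and> i + 1 \<in> B))"

definition shift :: "nat \<Rightarrow> int set set \<Rightarrow> int set set" where
  "shift n P = (THE Q. partition_of Q {1..int n + 1} \<and>
                        arcs Q = (\<lambda>(i, j). (i, j + 1)) ` arcs P)"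

end

theory Submission
  imports Defs
begin

definition good :: "(int\<times>int) set \<Rightarrow> int set \<Rightarrow> bool" where
 "good A X \<longleftrightarrow> A \<subseteq> X \<times> X \<and> (\<forall>(i,j)\<in>A. i<j) \<and> single_valued A \<and> single_valued (A\<inverse>)"

definition RR :: "(int\<times>int) set \<Rightarrow> int set \<Rightarrow> (int\<times>int) set" where
 "RR A X = {(x,y). x\<in>X \<and> y\<in>X \<and> ((x,y)\<in>A\<^sup>* \<or> (y,x)\<in>A\<^sup>*)}"

lemma rtr_le:
  assumes "\<forall>(i,j)\<in>A. i<j" "(x,y)\<in>A\<^sup>*" shows "x \<le> (y::int)"
  using assms(2)
proof induction
  case base then show ?case by simp
next
  case (step y z) then show ?case using assms(1) by fastforce
qed

lemma RR_equiv: assumes "good A X" shows "equiv X (RR A X)"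
proof (rule equivI)
  have sv: "single_valued A" and svc: "single_valued (A\<inverse>)" using assms good_def by auto
  show "RR A X \<subseteq> X \<times> X" by (auto simp: RR_def)
  show "refl_on X (RR A X)" by (auto simp: RR_def refl_on_def)
  show "sym (RR A X)" by (auto simp: RR_def sym_def)
  show "trans (RR A X)" unfolding trans_def
  proof (intro allI impI)
    fix x y z assume a: "(x,y)\<in>RR A X" "(y,z)\<in>RR A X"
    have "(x,z)\<in>A\<^sup>* \<or> (z,x)\<in>A\<^sup>*"
    proof -
      { assume 1: "(x,y)\<in>A\<^sup>*" and 2: "(z,y)\<in>A\<^sup>*"
        have "(y,x)\<in>(A\<inverse>)\<^sup>*" "(y,z)\<in>(A\<inverse>)\<^sup>*" using 1 2 by (auto simp: rtrancl_converse)
        from single_valued_confluent[OF svc this]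
        have ?thesis by (auto simp: rtrancl_converse) }
      moreover
      { assume 1: "(y,x)\<in>A\<^sup>*" and 2: "(y,z)\<in>A\<^sup>*"
        from single_valued_confluent[OF sv 1 2] have ?thesis by auto }
      ultimately show ?thesis using a unfolding RR_def
        by (auto intro: rtrancl_trans)
    qed
    then show "(x,z)\<in>RR A X" using a by (auto simp: RR_def)
  qed
qed

lemma RR_exists:
  assumes g: "good A X" and fin: "finite X"
  shows "partition_of (X // RR A X) X \<and> arcs (X // RR A X) = A"
proof -
  have eq: "equiv X (RR A X)" using RR_equiv[OF g] .
  have sub: "A \<subseteq> X \<times> X" and lt: "\<forall>(i,j)\<in>A. i<j" and sv: "single_valued A"
    using g good_def by auto
  have part: "partition_of (X // RR A X) X"
    unfolding partition_of_def is_set_partition_def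
  proof (intro conjI ballI impI)
    fix B assume "B \<in> X // RR A X"
    then show "B \<noteq> {}" using in_quotient_imp_non_empty[OF eq] by blast
    show "finite B" using in_quotient_imp_subset[OF eq \<open>B \<in> _\<close>] fin finite_subset by blast
  next
    fix B B' assume "B \<in> X // RR A X" "B' \<in> X // RR A X" "B \<noteq> B'"
    then show "B \<inter> B' = {}" using quotient_disj[OF eq] by blast
  next
    show "\<Union> (X // RR A X) = X" using Union_quotient[OF eq] .
  qed
  have arcs: "arcs (X // RR A X) = A"
  proof (rule set_eqI, clarify)
    fix i j
    show "(i,j) \<in> arcs (X // RR A X) \<longleftrightarrow> (i,j) \<in> A"
    proof
      assume "(i,j) \<in> arcs (X // RR A X)"
      then obtain B where B: "B \<in> X // RR A X" "i\<in>B" "j\<in>B" "i<j" "\<forall>k\<in>B. i<k \<longrightarrow> j\<le>k"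
        unfolding arcs_def by blast
      have ij: "(i,j) \<in> RR A X" using in_quotient_imp_in_rel[OF eq B(1)] B(2,3) by blast
      have "(i,j)\<in>A\<^sup>*" using ij B(4) rtr_le[OF lt, of j i] unfolding RR_def by auto
      then obtain s where s: "(i,s)\<in>A" "(s,j)\<in>A\<^sup>*" using B(4)
        by (metis converse_rtranclE less_irrefl)
      have "s \<in> B" using in_quotient_imp_closed[OF eq B(1) B(2), of s] s(1) sub
        unfolding RR_def by auto
      moreover have "i < s" using s(1) lt by auto
      ultimately have "j \<le> s" using B(5) by blast
      moreover have "s \<le> j" using rtr_le[OF lt s(2)] .
      ultimately show "(i,j)\<in>A" using s(1) by simp
    next
      assume ij: "(i,j)\<in>A"
      have iX: "i \<in> X" and jX: "j\<in>X" using ij sub by auto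
      let ?B = "RR A X `` {i}"
      have "?B \<in> X // RR A X" using quotientI[OF iX] .
      moreover have "i \<in> ?B" using equiv_class_self[OF eq iX] .
      moreover have "j \<in> ?B" using ij iX jX by (auto simp: RR_def)
      moreover have "i<j" using ij lt by auto
      moreover have "\<forall>k\<in>?B. i<k \<longrightarrow> j\<le>k"
      proof (intro ballI impI)
        fix k assume k: "k \<in> ?B" "i<k"
        have "(i,k)\<in>A\<^sup>*" using k rtr_le[OF lt, of k i] unfolding RR_def by auto
        then obtain s where s: "(i,s)\<in>A" "(s,k)\<in>A\<^sup>*" using k(2)
          by (metis converse_rtranclE less_irrefl)
        have "s = j" using sv s(1) ij by (auto simp: single_valued_def)
        then show "j \<le> k" using rtr_le[OF lt s(2)] by simp
      qed
      ultimately show "(i,j) \<in> arcs (X // RR A X)" unfolding arcs_def by blast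
    qed
  qed
  show ?thesis using part arcs by simp
qed


lemma part_disj:
  assumes p: "is_set_partition Q" and "B \<in> Q" "B' \<in> Q" "x \<in> B" "x \<in> B'"
  shows "B = B'"
proof (rule ccontr)
  assume "B \<noteq> B'"
  then have "B \<inter> B' = {}" using p assms(2,3) unfolding is_set_partition_def by simp
  then show False using assms(4,5) by blast
qed

lemma part_fin: "is_set_partition Q \<Longrightarrow> B \<in> Q \<Longrightarrow> finite B"
  unfolding is_set_partition_def by simp

lemma part_ne: "is_set_partition Q \<Longrightarrow> B \<in> Q \<Longrightarrow> B \<noteq> {}"
  unfolding is_set_partition_def by simp

lemma arc_block:
  assumes "is_set_partition Q" "(i,j) \<in> arcs Q" "B \<in> Q" "i \<in> B \<or> j \<in> B"
  shows "i \<in> B \<and> j \<in> B \<and> i < j \<and> (\<forall>k\<in>B. i<k \<longrightarrow> j\<le>k)"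
proof -
  obtain B' where B': "B'\<in>Q" "i\<in>B'" "j\<in>B'" "i<j" "\<forall>k\<in>B'. i<k \<longrightarrow> j\<le>k"
    using assms(2) unfolding arcs_def by blast
  have "B' = B"
  proof (cases "i \<in> B")
    case True then show ?thesis using part_disj[OF assms(1) B'(1) assms(3) B'(2)] by simp
  next
    case False then have "j \<in> B" using assms(4) by simp
    then show ?thesis using part_disj[OF assms(1) B'(1) assms(3) B'(3)] by simp
  qed
  then show ?thesis using B' by blast
qed

lemma arcs_lt: "(i,j) \<in> arcs Q \<Longrightarrow> i < j"
  unfolding arcs_def by blast

lemma same_block_rtr:
  assumes p: "is_set_partition Q" and B: "B \<in> Q"
  shows "x \<in> B \<Longrightarrow> y \<in> B \<Longrightarrow> x \<le> y \<Longrightarrow> (x,y) \<in> (arcs Q)\<^sup>*"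
proof (induction "nat (y - x)" arbitrary: x rule: less_induct)
  case less
  show ?case
  proof (cases "x = y")
    case True then show ?thesis by simp
  next
    case False
    hence xy: "x < y" using less by simp
    let ?S = "{k\<in>B. x<k}"
    have "finite B" using part_fin[OF p B(1)] .
    then have fin: "finite ?S" by simp
    have ne: "?S \<noteq> {}" using xy less by auto
    define s where "s = Min ?S"
    have sS: "s \<in> ?S" using Min_in[OF fin ne] s_def by simp
    have sy: "s \<le> y" using Min_le[OF fin] xy less s_def by simp
    have mn: "\<forall>k\<in>B. x<k \<longrightarrow> s\<le>k" using Min_le[OF fin] s_def by auto
    have arc: "(x,s) \<in> arcs Q" unfolding arcs_def using B less(2) sS mn by blast
    have "(s,y) \<in> (arcs Q)\<^sup>*" using less(1)[of s] sS sy less(3) xy by auto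
    then show ?thesis by (rule converse_rtrancl_into_rtrancl[OF arc])
  qed
qed

lemma rtr_same_block:
  assumes p: "is_set_partition Q" and B: "B \<in> Q" and x: "x \<in> B"
  shows "(x,y) \<in> (arcs Q)\<^sup>* \<Longrightarrow> y \<in> B"
proof (induction rule: rtrancl_induct)
  case base then show ?case using x .
next
  case (step y z) then show ?case using arc_block[OF p _ B] by blast
qed

lemma partition_RR:
  assumes P: "partition_of Q X"
  shows "Q = X // RR (arcs Q) X"
proof -
  have p: "is_set_partition Q" and U: "\<Union>Q = X" using P partition_of_def by auto
  have cls: "RR (arcs Q) X `` {x} = B" if B: "B \<in> Q" "x \<in> B" for B x
  proof
    show "RR (arcs Q) X `` {x} \<subseteq> B"
    proof
      fix y assume "y \<in> RR (arcs Q) X `` {x}"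
      hence y: "y \<in> X" "(x,y) \<in> (arcs Q)\<^sup>* \<or> (y,x) \<in> (arcs Q)\<^sup>*" unfolding RR_def by auto
      show "y \<in> B"
      proof (cases "(x,y) \<in> (arcs Q)\<^sup>*")
        case True then show ?thesis using rtr_same_block[OF p B] by blast
      next
        case False
        obtain B' where B': "B' \<in> Q" "y \<in> B'" using y U by blast
        have "(y,x) \<in> (arcs Q)\<^sup>*" using False y(2) by simp
        then have "x \<in> B'" using rtr_same_block[OF p B'(1) B'(2)] by simp
        then have "B' = B" using part_disj[OF p B'(1) B(1) _ B(2)] by simp
        then show ?thesis using B' by simp
      qed
    qed
    show "B \<subseteq> RR (arcs Q) X `` {x}"
    proof
      fix y assume y: "y \<in> B"
      have "(x,y) \<in> (arcs Q)\<^sup>* \<or> (y,x) \<in> (arcs Q)\<^sup>*"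
      proof (cases "x \<le> y")
        case True then show ?thesis using same_block_rtr[OF p B(1)] y B(2) by blast
      next
        case False then show ?thesis using same_block_rtr[OF p B(1)] y B(2) by simp
      qed
      moreover have "x \<in> X" "y \<in> X" using U B y by blast+
      ultimately have "(x,y) \<in> RR (arcs Q) X" unfolding RR_def by simp
      then show "y \<in> RR (arcs Q) X `` {x}" by simp
    qed
  qed
  show ?thesis
  proof
    show "Q \<subseteq> X // RR (arcs Q) X"
    proof
      fix B assume B: "B \<in> Q"
      have "B \<noteq> {}" using p B unfolding is_set_partition_def by simp
      then obtain x where x: "x \<in> B" by blast
      have "x \<in> X" using U B x by blast
      then have "RR (arcs Q) X `` {x} \<in> X // RR (arcs Q) X" by (rule quotientI)
      then show "B \<in> X // RR (arcs Q) X" using cls[OF B x] by simp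
    qed
    show "X // RR (arcs Q) X \<subseteq> Q"
    proof
      fix C assume "C \<in> X // RR (arcs Q) X"
      then obtain x where "x \<in> X" "C = RR (arcs Q) X `` {x}" by (auto elim: quotientE)
      then obtain B where B: "B \<in> Q" "x \<in> B" using U by blast
      have "C = B" using cls[OF B(1) B(2)] \<open>C = _\<close> by simp
      then show "C \<in> Q" using B by simp
    qed
  qed
qed

lemma partition_unique:
  "partition_of Q1 X \<Longrightarrow> partition_of Q2 X \<Longrightarrow> arcs Q1 = arcs Q2 \<Longrightarrow> Q1 = Q2"
proof -
  assume a: "partition_of Q1 X" "partition_of Q2 X" "arcs Q1 = arcs Q2"
  have "Q1 = X // RR (arcs Q1) X" using partition_RR[OF a(1)] .
  also have "\<dots> = X // RR (arcs Q2) X" using a(3) by simp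
  also have "\<dots> = Q2" using partition_RR[OF a(2)] by (rule sym)
  finally show "Q1 = Q2" .
qed


lemma arcs_in: "(i,j) \<in> arcs Q \<Longrightarrow> i \<in> \<Union>Q \<and> j \<in> \<Union>Q"
  unfolding arcs_def by blast

lemma arcs_good:
  assumes P: "partition_of Q X" shows "good (arcs Q) X"
proof -
  have p: "is_set_partition Q" and U: "\<Union>Q = X" using P partition_of_def by auto
  have sv: "single_valued (arcs Q)"
  proof (rule single_valuedI)
    fix i j j' assume a: "(i,j) \<in> arcs Q" "(i,j') \<in> arcs Q"
    obtain B where B: "B \<in> Q" "i \<in> B" using a(1) arcs_in U by blast
    have 1: "j \<in> B \<and> i<j \<and> (\<forall>k\<in>B. i<k \<longrightarrow> j\<le>k)" using arc_block[OF p a(1) B(1)] B by blast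
    have 2: "j' \<in> B \<and> i<j' \<and> (\<forall>k\<in>B. i<k \<longrightarrow> j'\<le>k)" using arc_block[OF p a(2) B(1)] B by blast
    show "j = j'" using 1 2 by force
  qed
  have svc: "single_valued ((arcs Q)\<inverse>)"
  proof (rule single_valuedI)
    fix j i i' assume a: "(j,i) \<in> (arcs Q)\<inverse>" "(j,i') \<in> (arcs Q)\<inverse>"
    hence a: "(i,j) \<in> arcs Q" "(i',j) \<in> arcs Q" by auto
    obtain B where B: "B \<in> Q" "j \<in> B" using a(1) arcs_in U by blast
    have 1: "i \<in> B \<and> i<j \<and> (\<forall>k\<in>B. i<k \<longrightarrow> j\<le>k)" using arc_block[OF p a(1) B(1)] B by blast
    have 2: "i' \<in> B \<and> i'<j \<and> (\<forall>k\<in>B. i'<k \<longrightarrow> j\<le>k)" using arc_block[OF p a(2) B(1)] B by blast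
    show "i = i'" using 1 2 by (meson linorder_neqE_linordered_idom not_le)
  qed
  have "arcs Q \<subseteq> X \<times> X" using arcs_in U by fast
  moreover have "\<forall>(i,j)\<in>arcs Q. i<j" using arcs_lt by fast
  ultimately show ?thesis unfolding good_def using sv svc by blast
qed

definition sh :: "(int\<times>int) set \<Rightarrow> (int\<times>int) set" where
  "sh A = (\<lambda>(i,j). (i, j+1)) ` A"

lemma sh_mem: "(a,b) \<in> sh A \<longleftrightarrow> (a, b - 1) \<in> A"
proof
  assume "(a,b) \<in> sh A"
  then obtain x y where "(x,y) \<in> A" "(a,b) = (x,y+1)" unfolding sh_def by auto
  then show "(a, b - 1) \<in> A" by auto
next
  assume "(a, b - 1) \<in> A"
  then have "(a, b-1+1) \<in> sh A" unfolding sh_def by (rule rev_image_eqI) simp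
  then show "(a,b) \<in> sh A" by simp
qed

lemma shift_props:
  assumes P: "partition_of P {1..int n}"
  shows "partition_of (shift n P) {1..int n + 1} \<and> arcs (shift n P) = sh (arcs P)"
proof -
  let ?X = "{1..int n + 1}"
  have g: "good (arcs P) {1..int n}" using arcs_good[OF P] .
  have gg: "arcs P \<subseteq> {1..int n} \<times> {1..int n}" "\<forall>(i,j)\<in>arcs P. i<j"
    "single_valued (arcs P)" "single_valued ((arcs P)\<inverse>)" using g unfolding good_def by auto
  have "good (sh (arcs P)) ?X"
    unfolding good_def
  proof (intro conjI)
    show "sh (arcs P) \<subseteq> ?X \<times> ?X"
    proof (clarify)
      fix a b assume "(a,b) \<in> sh (arcs P)"
      then have "(a,b-1) \<in> arcs P" by (simp add: sh_mem)
      then show "a \<in> ?X \<and> b \<in> ?X" using gg(1) by auto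
    qed
    show "\<forall>(i,j)\<in>sh (arcs P). i < j"
    proof (clarify)
      fix a b assume "(a,b) \<in> sh (arcs P)"
      then have "(a,b-1) \<in> arcs P" by (simp add: sh_mem)
      then show "a < b" using gg(2) by auto
    qed
    show "single_valued (sh (arcs P))"
    proof (rule single_valuedI)
      fix x y z assume "(x,y) \<in> sh (arcs P)" "(x,z) \<in> sh (arcs P)"
      then have "(x,y-1) \<in> arcs P" "(x,z-1) \<in> arcs P" by (simp_all add: sh_mem)
      then have "y - 1 = z - 1" using gg(3) unfolding single_valued_def by blast
      then show "y = z" by simp
    qed
    show "single_valued ((sh (arcs P))\<inverse>)"
    proof (rule single_valuedI)
      fix x y z assume "(x,y) \<in> (sh (arcs P))\<inverse>" "(x,z) \<in> (sh (arcs P))\<inverse>"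
      then have "(y,x-1) \<in> arcs P" "(z,x-1) \<in> arcs P" by (simp_all add: sh_mem)
      then show "y = z" using gg(4) unfolding single_valued_def by blast
    qed
  qed
  from RR_exists[OF this] have ex: "\<exists>Q. partition_of Q ?X \<and> arcs Q = sh (arcs P)" by blast
  have "\<exists>!Q. partition_of Q ?X \<and> arcs Q = sh (arcs P)"
    using ex partition_unique by metis
  from theI'[OF this] show ?thesis unfolding shift_def sh_def by simp
qed


definition has_out :: "int set set \<Rightarrow> int \<Rightarrow> bool" where
  "has_out Q x \<longleftrightarrow> (\<exists>j. (x,j) \<in> arcs Q)"
definition has_in :: "int set set \<Rightarrow> int \<Rightarrow> bool" where
  "has_in Q x \<longleftrightarrow> (\<exists>i. (i,x) \<in> arcs Q)"

lemma out_iff: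
  assumes p: "is_set_partition Q" and B: "B \<in> Q" and x: "x \<in> B"
  shows "has_out Q x \<longleftrightarrow> (\<exists>k\<in>B. x<k)"
proof
  assume "has_out Q x"
  then obtain j where "(x,j) \<in> arcs Q" unfolding has_out_def by blast
  then show "\<exists>k\<in>B. x<k" using arc_block[OF p _ B] x by blast
next
  assume "\<exists>k\<in>B. x<k"
  let ?S = "{k\<in>B. x<k}"
  have "finite B" using part_fin[OF p B(1)] .
  then have fin: "finite ?S" by simp
  have ne: "?S \<noteq> {}" using \<open>\<exists>k\<in>B. x<k\<close> by auto
  define s where "s = Min ?S"
  have sS: "s \<in> ?S" using Min_in[OF fin ne] s_def by simp
  have mn: "\<forall>k\<in>B. x<k \<longrightarrow> s\<le>k" using Min_le[OF fin] s_def by auto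
  have "(x,s) \<in> arcs Q" unfolding arcs_def using B x sS mn by blast
  then show "has_out Q x" unfolding has_out_def by blast
qed

lemma in_iff:
  assumes p: "is_set_partition Q" and B: "B \<in> Q" and x: "x \<in> B"
  shows "has_in Q x \<longleftrightarrow> (\<exists>k\<in>B. k<x)"
proof
  assume "has_in Q x"
  then obtain i where "(i,x) \<in> arcs Q" unfolding has_in_def by blast
  then show "\<exists>k\<in>B. k<x" using arc_block[OF p _ B] x by blast
next
  assume "\<exists>k\<in>B. k<x"
  let ?S = "{k\<in>B. k<x}"
  have "finite B" using part_fin[OF p B(1)] .
  then have fin: "finite ?S" by simp
  have ne: "?S \<noteq> {}" using \<open>\<exists>k\<in>B. k<x\<close> by auto
  define s where "s = Max ?S"
  have sS: "s \<in> ?S" using Max_in[OF fin ne] s_def by simp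
  have mx: "\<forall>k\<in>B. s<k \<longrightarrow> x\<le>k"
  proof (intro ballI impI)
    fix k assume "k \<in> B" "s < k"
    show "x \<le> k"
    proof (rule ccontr)
      assume "\<not> x \<le> k"
      then have "k \<in> ?S" using \<open>k\<in>B\<close> by simp
      then have "k \<le> s" using Max_ge[OF fin] s_def by simp
      then show False using \<open>s<k\<close> by simp
    qed
  qed
  have "(s,x) \<in> arcs Q" unfolding arcs_def using B x sS mx by blast
  then show "has_in Q x" unfolding has_in_def by blast
qed

lemma feasible_iff:
  assumes P: "partition_of Q X"
  shows "feasible Q \<longleftrightarrow> (\<forall>x\<in>X. has_out Q x \<or> has_in Q x)"
proof -
  have p: "is_set_partition Q" and U: "\<Union>Q = X" using P partition_of_def by auto
  show ?thesis
  proof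
    assume f: "feasible Q"
    show "\<forall>x\<in>X. has_out Q x \<or> has_in Q x"
    proof
      fix x assume "x \<in> X"
      then obtain B where B: "B \<in> Q" "x \<in> B" using U by blast
      have "card B \<ge> 2" using f B unfolding feasible_def by blast
      have "\<exists>k\<in>B. k \<noteq> x"
      proof (rule ccontr)
        assume "\<not> ?thesis"
        then have "B \<subseteq> {x}" by blast
        then have "card B \<le> 1" using card_mono[of "{x}" B] by simp
        then show False using \<open>card B \<ge> 2\<close> by simp
      qed
      then obtain k where k: "k \<in> B" "k \<noteq> x" by blast
      have "x < k \<or> k < x" using k(2) by arith
      then show "has_out Q x \<or> has_in Q x"
      proof
        assume "x < k" then show ?thesis using out_iff[OF p B(1) B(2)] k(1) by blast
      next
        assume "k < x" then show ?thesis using in_iff[OF p B(1) B(2)] k(1) by blast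
      qed
    qed
  next
    assume h: "\<forall>x\<in>X. has_out Q x \<or> has_in Q x"
    show "feasible Q" unfolding feasible_def
    proof
      fix B assume B: "B \<in> Q"
      then obtain x where x: "x \<in> B" using part_ne[OF p] by blast
      have fin: "finite B" using part_fin[OF p B(1)] .
      have "x \<in> X" using U B x by blast
      then have "has_out Q x \<or> has_in Q x" using h by blast
      then have "\<exists>k\<in>B. k \<noteq> x"
      proof
        assume "has_out Q x" then show ?thesis using out_iff[OF p B x] by fastforce
      next
        assume "has_in Q x" then show ?thesis using in_iff[OF p B x] by fastforce
      qed
      then obtain k where k: "k \<in> B" "k \<noteq> x" by blast
      have "{x,k} \<subseteq> B" using x k by simp
      then have "card {x,k} \<le> card B" by (rule card_mono[OF fin])
      then show "2 \<le> card B" using k by simp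
    qed
  qed
qed

lemma poor_iff:
  assumes P: "partition_of Q X"
  shows "poor Q \<longleftrightarrow> \<not> (\<exists>x. has_in Q x \<and> has_out Q x)"
proof -
  have p: "is_set_partition Q" and U: "\<Union>Q = X" using P partition_of_def by auto
  show ?thesis
  proof
    assume po: "poor Q"
    show "\<not> (\<exists>x. has_in Q x \<and> has_out Q x)"
    proof
      assume "\<exists>x. has_in Q x \<and> has_out Q x"
      then obtain x i j where a: "(i,x) \<in> arcs Q" "(x,j) \<in> arcs Q"
        unfolding has_in_def has_out_def by blast
      obtain B where B: "B \<in> Q" "x \<in> B" using a(2) arcs_in by blast
      have 1: "i \<in> B" "i < x" using arc_block[OF p a(1) B(1)] B(2) by auto
      have 2: "j \<in> B" "x < j" using arc_block[OF p a(2) B(1)] B(2) by auto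
      have fin: "finite B" using part_fin[OF p B(1)] .
      have "{i,x,j} \<subseteq> B" using 1 2 B by simp
      then have "card {i,x,j} \<le> card B" by (rule card_mono[OF fin])
      moreover have "card {i,x,j} = 3" using 1 2 by simp
      moreover have "card B \<le> 2" using po B unfolding poor_def by blast
      ultimately show False by simp
    qed
  next
    assume h: "\<not> (\<exists>x. has_in Q x \<and> has_out Q x)"
    show "poor Q" unfolding poor_def
    proof
      fix B assume B: "B \<in> Q"
      have fin: "finite B" using part_fin[OF p B(1)] .
      have "B \<subseteq> {Min B, Max B}"
      proof
        fix x assume x: "x \<in> B"
        have "\<not> has_in Q x \<or> \<not> has_out Q x" using h by blast
        then have "(\<forall>k\<in>B. x \<le> k) \<or> (\<forall>k\<in>B. k \<le> x)"
          using in_iff[OF p B x] out_iff[OF p B x] by (auto simp: not_less)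
        then show "x \<in> {Min B, Max B}"
        proof
          assume "\<forall>k\<in>B. x \<le> k"
          then have "Min B = x" using Min_eqI[OF fin, of x] x by blast
          then show ?thesis by simp
        next
          assume "\<forall>k\<in>B. k \<le> x"
          then have "Max B = x" using Max_eqI[OF fin, of x] x by blast
          then show ?thesis by simp
        qed
      qed
      then have "card B \<le> card {Min B, Max B}" by (rule card_mono[rotated]) simp
      also have "\<dots> \<le> 2" by (simp add: card_insert_le_m1)
      finally show "card B \<le> 2" .
    qed
  qed
qed

lemma two_reg_iff:
  assumes p: "is_set_partition Q"
  shows "two_regular Q \<longleftrightarrow> (\<forall>i. (i,i+1) \<notin> arcs Q)"
proof
  assume t: "two_regular Q"
  show "\<forall>i. (i,i+1) \<notin> arcs Q"
    using t unfolding two_regular_def arcs_def by blast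
next
  assume h: "\<forall>i. (i,i+1) \<notin> arcs Q"
  show "two_regular Q" unfolding two_regular_def
  proof (intro ballI allI notI)
    fix B i assume "B \<in> Q" "i \<in> B \<and> i + 1 \<in> B"
    then have "(i,i+1) \<in> arcs Q" unfolding arcs_def by force
    then show False using h by blast
  qed
qed

lemma cond_iff:
  assumes P: "partition_of Q X"
  shows "(\<forall>B\<in>Q. \<forall>B'\<in>Q. 1 + Max B \<noteq> Min B') \<longleftrightarrow>
         \<not> (\<exists>k. k \<in> X \<and> k+1 \<in> X \<and> \<not> has_out Q k \<and> \<not> has_in Q (k+1))"
proof -
  have p: "is_set_partition Q" and U: "\<Union>Q = X" using P partition_of_def by auto
  show ?thesis
  proof
    assume c: "\<forall>B\<in>Q. \<forall>B'\<in>Q. 1 + Max B \<noteq> Min B'"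
    show "\<not> (\<exists>k. k \<in> X \<and> k+1 \<in> X \<and> \<not> has_out Q k \<and> \<not> has_in Q (k+1))"
    proof
      assume "\<exists>k. k \<in> X \<and> k+1 \<in> X \<and> \<not> has_out Q k \<and> \<not> has_in Q (k+1)"
      then obtain k where k: "k \<in> X" "k+1 \<in> X" "\<not> has_out Q k" "\<not> has_in Q (k+1)" by blast
      obtain B where B: "B \<in> Q" "k \<in> B" using k U by blast
      obtain B' where B': "B' \<in> Q" "k+1 \<in> B'" using k U by blast
      have fin: "finite B" "finite B'" using part_fin[OF p B(1)] part_fin[OF p B'(1)] by simp_all
      have "Max B = k" using out_iff[OF p B] k(3) Max_eqI[OF fin(1)] B(2) by force
      moreover have "Min B' = k+1" using in_iff[OF p B'] k(4) Min_eqI[OF fin(2)] B'(2) by force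
      ultimately show False using c B B' by force
    qed
  next
    assume h: "\<not> (\<exists>k. k \<in> X \<and> k+1 \<in> X \<and> \<not> has_out Q k \<and> \<not> has_in Q (k+1))"
    show "\<forall>B\<in>Q. \<forall>B'\<in>Q. 1 + Max B \<noteq> Min B'"
    proof (intro ballI notI)
      fix B B' assume B: "B \<in> Q" and B': "B' \<in> Q" and e: "1 + Max B = Min B'"
      have fin: "finite B" "finite B'" "B \<noteq> {}" "B' \<noteq> {}"
        using part_fin[OF p B(1)] part_fin[OF p B'] part_ne[OF p B(1)] part_ne[OF p B'] by simp_all
      have m1: "Max B \<in> B" using Max_in fin by blast
      have m2: "Min B' \<in> B'" using Min_in fin by blast
      have "\<not> has_out Q (Max B)" using out_iff[OF p B m1] Max_ge[OF fin(1)] by force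
      moreover have "\<not> has_in Q (Max B + 1)" using in_iff[OF p B' ] m2 e Min_le[OF fin(2)]
        by (metis add.commute not_le)
      moreover have "Max B \<in> X" "Max B + 1 \<in> X" using m1 m2 e B B' U by (auto simp: add.commute)
      ultimately show False using h by blast
    qed
  qed
qed


lemma sh_inj: "sh A = sh B \<Longrightarrow> A = B"
proof -
  have "inj (\<lambda>(i::int, j::int). (i, j+1))" by (auto simp: inj_def)
  then show "sh A = sh B \<Longrightarrow> A = B" unfolding sh_def by (simp add: inj_image_eq_iff)
qed

lemma shift_inj:
  assumes "partition_of P1 {1..int n}" "partition_of P2 {1..int n}" "shift n P1 = shift n P2"
  shows "P1 = P2"
  using shift_props[OF assms(1)] shift_props[OF assms(2)] assms sh_inj partition_unique by metis

lemma shift_surj: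
  assumes Q: "partition_of Q {1..int n + 1}" and t: "two_regular Q"
  shows "\<exists>P. partition_of P {1..int n} \<and> shift n P = Q"
proof -
  let ?A = "(\<lambda>(i,j). (i, j - 1)) ` arcs Q"
  have g: "good (arcs Q) {1..int n + 1}" using arcs_good[OF Q] .
  have nr: "\<forall>i. (i,i+1) \<notin> arcs Q" using two_reg_iff Q t partition_of_def by blast
  have a: "\<And>i j. (i,j) \<in> arcs Q \<Longrightarrow> 1 \<le> i \<and> i < j - 1 \<and> j \<le> int n + 1"
  proof -
    fix i j assume ij: "(i,j) \<in> arcs Q"
    have "i < j" "1 \<le> i" "j \<le> int n + 1" using g ij unfolding good_def by auto
    moreover have "j \<noteq> i + 1" using nr ij by auto
    ultimately show "1 \<le> i \<and> i < j - 1 \<and> j \<le> int n + 1" by simp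
  qed
  have "good ?A {1..int n}"
    unfolding good_def
  proof (intro conjI)
    show "?A \<subseteq> {1..int n} \<times> {1..int n}" using a by fastforce
    show "\<forall>(i,j)\<in>?A. i < j" using a by fastforce
    show "single_valued ?A" using g unfolding good_def single_valued_def by fastforce
    show "single_valued (?A\<inverse>)" using g unfolding good_def single_valued_def by fastforce
  qed
  from RR_exists[OF this] obtain P where P: "partition_of P {1..int n}" "arcs P = ?A" by blast
  have "sh ?A = arcs Q" unfolding sh_def image_image by (simp add: case_prod_beta')
  then have "arcs (shift n P) = arcs Q" using shift_props[OF P(1)] P(2) by simp
  then have "shift n P = Q" using partition_unique shift_props[OF P(1)] Q by blast
  then show ?thesis using P by blast
qed

lemma bij_gen:
  assumes eq: "\<And>P. partition_of P {1..int n} \<Longrightarrow> \<Phi> P \<longleftrightarrow> \<Psi> (shift n P)"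
  and tr: "\<And>Q. \<Psi> Q \<Longrightarrow> two_regular Q"
  shows "bij_betw (shift n) {P. partition_of P {1..int n} \<and> \<Phi> P}
           {Q. partition_of Q {1..int n + 1} \<and> \<Psi> Q}"
  unfolding bij_betw_def
proof
  show "inj_on (shift n) {P. partition_of P {1..int n} \<and> \<Phi> P}"
    using shift_inj by (auto simp: inj_on_def)
  show "shift n ` {P. partition_of P {1..int n} \<and> \<Phi> P} = {Q. partition_of Q {1..int n + 1} \<and> \<Psi> Q}"
  proof
    show "shift n ` {P. partition_of P {1..int n} \<and> \<Phi> P} \<subseteq> {Q. partition_of Q {1..int n + 1} \<and> \<Psi> Q}"
      using shift_props eq by auto
    show "{Q. partition_of Q {1..int n + 1} \<and> \<Psi> Q} \<subseteq> shift n ` {P. partition_of P {1..int n} \<and> \<Phi> P}"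
    proof
      fix Q assume "Q \<in> {Q. partition_of Q {1..int n + 1} \<and> \<Psi> Q}"
      then have Q: "partition_of Q {1..int n + 1}" "\<Psi> Q" by auto
      obtain P where P: "partition_of P {1..int n}" "shift n P = Q" using shift_surj[OF Q(1) tr[OF Q(2)]] by blast
      then have "\<Phi> P" using eq Q(2) by blast
      then show "Q \<in> shift n ` {P. partition_of P {1..int n} \<and> \<Phi> P}" using P by blast
    qed
  qed
qed

lemma shift_facts:
  assumes P: "partition_of P {1..int n}"
  shows "(\<forall>x. has_out (shift n P) x \<longleftrightarrow> has_out P x)"
    "(\<forall>x. has_in (shift n P) x \<longleftrightarrow> has_in P (x - 1))"
    "two_regular (shift n P)"
proof -
  have Q: "partition_of (shift n P) {1..int n + 1}" and a: "arcs (shift n P) = sh (arcs P)"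
    using shift_props[OF P] by auto
  show "\<forall>x. has_out (shift n P) x \<longleftrightarrow> has_out P x"
    unfolding has_out_def a sh_def by auto
  show "\<forall>x. has_in (shift n P) x \<longleftrightarrow> has_in P (x - 1)"
    unfolding has_in_def a sh_def by force
  have "\<forall>i. (i,i+1) \<notin> arcs (shift n P)" unfolding a sh_def using arcs_lt by fastforce
  then show "two_regular (shift n P)" using two_reg_iff Q partition_of_def by blast
qed

lemma feas_eq:
  assumes P: "partition_of P {1..int n}"
  shows "feasible P \<longleftrightarrow> two_regular (shift n P) \<and>
           (\<forall>B\<in>shift n P. \<forall>B'\<in>shift n P. 1 + Max B \<noteq> Min B')"
proof -
  have Q: "partition_of (shift n P) {1..int n + 1}" using shift_props[OF P] by auto
  note f = shift_facts[OF P]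
  have "feasible P \<longleftrightarrow> (\<forall>x\<in>{1..int n}. has_out P x \<or> has_in P x)" using feasible_iff[OF P] .
  also have "\<dots> \<longleftrightarrow> \<not> (\<exists>k. k \<in> {1..int n + 1} \<and> k+1 \<in> {1..int n + 1} \<and>
      \<not> has_out (shift n P) k \<and> \<not> has_in (shift n P) (k+1))"
    using f(1,2) by auto
  also have "\<dots> \<longleftrightarrow> (\<forall>B\<in>shift n P. \<forall>B'\<in>shift n P. 1 + Max B \<noteq> Min B')"
    using cond_iff[OF Q] by simp
  finally show ?thesis using f(3) by simp
qed

lemma nc_eq:
  assumes P: "partition_of P {1..int n}"
  shows "(poor P \<and> noncrossing P) \<longleftrightarrow> two_regular (shift n P) \<and> noncrossing (shift n P)"
proof -
  have a: "arcs (shift n P) = sh (arcs P)" using shift_props[OF P] by auto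
  note f = shift_facts[OF P]
  have "(poor P \<and> noncrossing P) \<longleftrightarrow> noncrossing (shift n P)"
  proof
    assume h: "poor P \<and> noncrossing P"
    have np: "\<not> (\<exists>x. has_in P x \<and> has_out P x)" using h poor_iff[OF P] by blast
    show "noncrossing (shift n P)" unfolding noncrossing_def
    proof
      assume "\<exists>i j k l. (i, k) \<in> arcs (shift n P) \<and> (j, l) \<in> arcs (shift n P) \<and> i < j \<and> j < k \<and> k < l"
      then obtain i j k l where c0: "(i,k) \<in> arcs (shift n P)" "(j,l) \<in> arcs (shift n P)"
        "i < j" "j < k" "k < l" by blast
      have c: "(i,k-1) \<in> arcs P" "(j,l-1) \<in> arcs P" using c0(1,2) unfolding a by (simp_all add: sh_mem)
      show False
      proof (cases "j = k - 1")
        case True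
        then have "has_in P j \<and> has_out P j" using c unfolding has_in_def has_out_def by blast
        then show False using np by blast
      next
        case False
        then have "j < k - 1" "k - 1 < l - 1" using c0 by simp_all
        then show False using h c c0(3) unfolding noncrossing_def by blast
      qed
    qed
  next
    assume h: "noncrossing (shift n P)"
    have nc: False if "(i,k) \<in> arcs P" "(j,l) \<in> arcs P" "i < j" "j < k + 1" "k < l" for i j k l
    proof -
      have "(i, k+1) \<in> arcs (shift n P)" "(j, l+1) \<in> arcs (shift n P)"
        using that(1,2) unfolding a by (simp_all add: sh_mem)
      moreover have "i < j" "j < k+1" "k+1 < l+1" using that by simp_all
      ultimately show False using h unfolding noncrossing_def by blast
    qed
    have "noncrossing P" unfolding noncrossing_def
    proof
      assume "\<exists>i j k l. (i, k) \<in> arcs P \<and> (j, l) \<in> arcs P \<and> i < j \<and> j < k \<and> k < l"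
      then obtain i j k l where c: "(i, k) \<in> arcs P" "(j, l) \<in> arcs P" "i < j" "j < k" "k < l" by blast
      show False using nc[OF c(1,2,3) _ c(5)] c(4) by simp
    qed
    moreover have "\<not> (\<exists>x. has_in P x \<and> has_out P x)"
    proof
      assume "\<exists>x. has_in P x \<and> has_out P x"
      then obtain i x l where c: "(i,x) \<in> arcs P" "(x,l) \<in> arcs P" unfolding has_in_def has_out_def by blast
      have "i < x" "x < l" using arcs_lt c by blast+
      then show False using nc[OF c] by simp
    qed
    ultimately show "poor P \<and> noncrossing P" using poor_iff[OF P] by blast
  qed
  then show ?thesis using f(3) by simp
qed

theorem lemma3p1:
  fixes n :: nat
  shows "bij_betw (shift n)
           {P. partition_of P {1..int n} \<and> feasible P}
           {Q. partition_of Q {1..int n + 1} \<and> two_regular Q \<and>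
               (\<forall>B\<in>Q. \<forall>B'\<in>Q. 1 + Max B \<noteq> Min B')}
       \<and> bij_betw (shift n)
           {P. partition_of P {1..int n} \<and> poor P \<and> noncrossing P}
           {Q. partition_of Q {1..int n + 1} \<and> two_regular Q \<and> noncrossing Q}"
proof
  show "bij_betw (shift n)
           {P. partition_of P {1..int n} \<and> feasible P}
           {Q. partition_of Q {1..int n + 1} \<and> two_regular Q \<and>
               (\<forall>B\<in>Q. \<forall>B'\<in>Q. 1 + Max B \<noteq> Min B')}"
    by (rule bij_gen[of n feasible "\<lambda>Q. two_regular Q \<and> (\<forall>B\<in>Q. \<forall>B'\<in>Q. 1 + Max B \<noteq> Min B')"])
      (erule feas_eq, simp)
  show "bij_betw (shift n)
           {P. partition_of P {1..int n} \<and> poor P \<and> noncrossing P}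
           {Q. partition_of Q {1..int n + 1} \<and> two_regular Q \<and> noncrossing Q}"
    by (rule bij_gen[of n "\<lambda>P. poor P \<and> noncrossing P" "\<lambda>Q. two_regular Q \<and> noncrossing Q"])
      (erule nc_eq, simp)
qed

end
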